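(* Let $G$ be the direct sum of groups $\langle a_n\rangle$, $n\in\omega$, each of order $2$. Then $(a_n)_{n\in\omega}$ is a $T$-sequence on $G$, and the canonical bijection $F\mapsto\sum_{i\in F}a_i$ from the Hamming space $\mathbb{H}$ onto $(G,\mathcal{C}_{\tau(a_n)})$ is an asymorphism.
   Context: A sequence $(a_n)$ in an abelian group $G$ is a $T$-sequence if there is a Hausdorff group topology on $G$ in which $(a_n)\to0$; $\tau(a_n)$ is the strongest group topology on $G$ in which $(a_n)\to0$, and $\mathcal{C}_{\tau(a_n)}$ is the group ideal of precompact subsets of $(G,\tau(a_n))$, defining the coarse structure with base $\{\{(x,y):x\in A+y\}:A\in\mathcal{C}_{\tau(a_n)}\}$. The Hamming space $\mathbb{H}$ is the set of finite subsets of $\omega$ with metric $h(F,H)=|F\triangle H|$, with coarse structure generated by $\{(x,y):h(x,y)\le r\}$, $r\ge 0$. An asymorphism is a bijection $f$ such that $f$ and $f^{-1}$ are macro-uniform, where $f:(X,\mathcal{E})\to(X',\mathcal{E}')$ is macro-uniform if for each $E\in\mathcal{E}$ there is $E'\in\mathcal{E}'$ with $f(E[x])\subseteq E'[f(x)]$ for all $x$. *)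

theory Defs
  imports "HOL-Analysis.Analysis" "HOL-Library.Z2" "HOL-Library.Function_Algebras"
begin

text \<open>The group G = direct sum of countably many copies of Z/2, realised as the
finitely supported functions nat => bit with pointwise addition.\<close>

definition Gset :: "(nat \<Rightarrow> bit) set" where
  "Gset = {g. finite {n. g n \<noteq> 0}}"

definition gen :: "nat \<Rightarrow> (nat \<Rightarrow> bit)" where
  "gen n = (\<lambda>k. if k = n then 1 else 0)"

definition group_topology :: "'a::ab_group_add set \<Rightarrow> 'a topology \<Rightarrow> bool" where
  "group_topology S T \<longleftrightarrow> topspace T = S \<and>
     continuous_map (prod_topology T T) T (\<lambda>(x, y). x + y) \<and>
     continuous_map T T uminus"

definition is_T_sequence :: "'a::ab_group_add set \<Rightarrow> (nat \<Rightarrow> 'a) \<Rightarrow> bool" where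
  "is_T_sequence S a \<longleftrightarrow> (\<exists>T. group_topology S T \<and> Hausdorff_space T \<and> limitin T a 0 sequentially)"

definition strongest_topology :: "'a::ab_group_add set \<Rightarrow> (nat \<Rightarrow> 'a) \<Rightarrow> 'a topology" where
  "strongest_topology S a = (THE T. group_topology S T \<and> limitin T a 0 sequentially \<and>
      (\<forall>T'. group_topology S T' \<and> limitin T' a 0 sequentially \<longrightarrow>
            (\<forall>U. openin T' U \<longrightarrow> openin T U)))"

definition precompact_in :: "'a::ab_group_add set \<Rightarrow> 'a topology \<Rightarrow> 'a set \<Rightarrow> bool" where
  "precompact_in S T A \<longleftrightarrow> A \<subseteq> S \<and>
     (\<forall>U. openin T U \<and> 0 \<in> U \<longrightarrow>
        (\<exists>F. finite F \<and> F \<subseteq> S \<and> A \<subseteq> {f + u | f u. f \<in> F \<and> u \<in> U}))"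

definition group_coarse :: "'a::ab_group_add set \<Rightarrow> 'a topology \<Rightarrow> ('a \<times> 'a) set set" where
  "group_coarse S T = {E. \<exists>A. precompact_in S T A \<and>
      E \<subseteq> {(x, y). x \<in> S \<and> y \<in> S \<and> x \<in> (\<lambda>z. z + y) ` A}}"

definition Hset :: "nat set set" where
  "Hset = {F. finite F}"

definition hamming :: "nat set \<Rightarrow> nat set \<Rightarrow> nat" where
  "hamming F H = card ((F - H) \<union> (H - F))"

definition hamming_coarse :: "(nat set \<times> nat set) set set" where
  "hamming_coarse = {E. \<exists>r::real. r \<ge> 0 \<and>
      E \<subseteq> {(x, y). x \<in> Hset \<and> y \<in> Hset \<and> real (hamming x y) \<le> r}}"

definition macro_uniform ::
  "'a set \<Rightarrow> ('a \<times> 'a) set set \<Rightarrow> ('b \<times> 'b) set set \<Rightarrow> ('a \<Rightarrow> 'b) \<Rightarrow> bool" where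
  "macro_uniform X EE EE' f \<longleftrightarrow>
     (\<forall>E\<in>EE. \<exists>E'\<in>EE'. \<forall>x\<in>X. f ` (E `` {x}) \<subseteq> E' `` {f x})"

definition asymorphism ::
  "'a set \<Rightarrow> ('a \<times> 'a) set set \<Rightarrow> 'b set \<Rightarrow> ('b \<times> 'b) set set \<Rightarrow> ('a \<Rightarrow> 'b) \<Rightarrow> bool" where
  "asymorphism X EE Y EE' f \<longleftrightarrow> bij_betw f X Y \<and>
     macro_uniform X EE EE' f \<and> macro_uniform Y EE' EE (inv_into X f)"

end

theory Submission imports Defs begin
definition supp :: "(nat \<Rightarrow> bit) \<Rightarrow> nat set" where "supp g = {n. g n \<noteq> 0}"

lemma bit_cases2: "(x::bit) = 0 \<or> x = 1" by (metis bit_not_zero_iff)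
lemma bit_add_self[simp]: "(x::bit) + x = 0"
  using bit_cases2[of x] by auto
lemma bit_add_ne: "((x::bit) + y \<noteq> 0) \<longleftrightarrow> x \<noteq> y"
  using bit_cases2[of x] bit_cases2[of y] by auto
lemma fun_add_self[simp]: "(g::nat\<Rightarrow>bit) + g = 0"
  by (rule ext) simp
lemma fun_add_cancel[simp]: "(g::nat\<Rightarrow>bit) + (g + h) = h"
  by (simp add: add.assoc[symmetric])
lemma fun_uminus: "- (g::nat\<Rightarrow>bit) = g"
  by (metis add.inverse_unique fun_add_self)
lemma supp_add: "supp (a+b) = (supp a - supp b) \<union> (supp b - supp a)"
  unfolding supp_def using bit_add_ne by (auto simp: plus_fun_def)
lemma supp_0[simp]: "supp 0 = {}" by (simp add: supp_def)
lemma Gset_iff: "g \<in> Gset \<longleftrightarrow> finite (supp g)" by (simp add: Gset_def supp_def)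
lemma Gset_add: "a \<in> Gset \<Longrightarrow> b \<in> Gset \<Longrightarrow> a + b \<in> Gset"
  by (simp add: Gset_iff supp_add)
lemma Gset_0[simp]: "0 \<in> Gset" by (simp add: Gset_iff)
lemma sum_gen_apply: "finite S \<Longrightarrow> (\<Sum>i\<in>S. gen i) n = (if n \<in> S then 1 else 0)"
  by (induction S rule: finite_induct) (auto simp: gen_def)
lemma supp_sum_gen: "finite S \<Longrightarrow> supp (\<Sum>i\<in>S. gen i) = S"
  by (simp add: supp_def sum_gen_apply)
lemma sum_gen_supp: "g \<in> Gset \<Longrightarrow> (\<Sum>i\<in>supp g. gen i) = g"
  apply (rule ext) apply (simp add: sum_gen_apply Gset_iff)
  using bit_cases2 by (auto simp: supp_def)
lemma Gset_sum_gen: "finite S \<Longrightarrow> (\<Sum>i\<in>S. gen i) \<in> Gset"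
  by (simp add: Gset_iff supp_sum_gen)
lemma supp_gen: "supp (gen n) = {n}" by (simp add: supp_def gen_def)

definition W :: "(nat \<Rightarrow> nat) \<Rightarrow> (nat \<Rightarrow> bit) set" where
  "W m = {g \<in> Gset. \<forall>k. card (supp g \<inter> {..<m k}) \<le> k}"
definition tr :: "(nat \<Rightarrow> bit) \<Rightarrow> (nat \<Rightarrow> bit) set \<Rightarrow> (nat \<Rightarrow> bit) set" where
  "tr x S = (\<lambda>g. x + g) ` S"
definition TWopen :: "(nat \<Rightarrow> bit) set \<Rightarrow> bool" where
  "TWopen U \<longleftrightarrow> U \<subseteq> Gset \<and> (\<forall>x\<in>U. \<exists>m. tr x (W m) \<subseteq> U)"
definition TW :: "(nat \<Rightarrow> bit) topology" where "TW = topology TWopen"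

lemma W_sub: "W m \<subseteq> Gset" by (auto simp: W_def)
lemma W_0[simp]: "0 \<in> W m" by (simp add: W_def)
lemma W_mono: "(\<And>k. m k \<le> m' k) \<Longrightarrow> W m' \<subseteq> W m"
proof
  fix g assume le: "\<And>k. m k \<le> m' k" and g: "g \<in> W m'"
  have "card (supp g \<inter> {..<m k}) \<le> k" for k
  proof -
    have "finite (supp g)" using g by (auto simp: W_def Gset_iff)
    hence "card (supp g \<inter> {..<m k}) \<le> card (supp g \<inter> {..<m' k})"
      using le[of k] by (intro card_mono) auto
    thus ?thesis using g by (auto simp: W_def intro: le_trans)
  qed
  thus "g \<in> W m" using g by (auto simp: W_def)
qed

definition half :: "(nat \<Rightarrow> nat) \<Rightarrow> nat \<Rightarrow> nat" where
  "half m j = Max (m ` {..2*j+1})"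

lemma W_half: assumes a: "a \<in> W (half m)" and b: "b \<in> W (half m)" shows "a + b \<in> W m"
proof -
  have fa: "finite (supp a)" and fb: "finite (supp b)" using a b by (auto simp: W_def Gset_iff)
  have "card (supp (a+b) \<inter> {..<m k}) \<le> k" for k
  proof -
    define j where "j = k div 2"
    have mk: "m k \<le> half m j" unfolding half_def j_def by (rule Max_ge) auto
    have "card (supp (a+b) \<inter> {..<m k}) \<le> card ((supp a \<inter> {..<m k}) \<union> (supp b \<inter> {..<m k}))"
      using fa fb by (intro card_mono) (auto simp: supp_add)
    also have "\<dots> \<le> card (supp a \<inter> {..<m k}) + card (supp b \<inter> {..<m k})" by (rule card_Un_le)
    also have "card (supp a \<inter> {..<m k}) \<le> card (supp a \<inter> {..<half m j})"
      using fa mk by (intro card_mono) auto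
    also have "\<dots> \<le> j" using a by (auto simp: W_def)
    also have "card (supp b \<inter> {..<m k}) \<le> card (supp b \<inter> {..<half m j})"
      using fb mk by (intro card_mono) auto
    also have "\<dots> \<le> j" using b by (auto simp: W_def)
    finally show ?thesis unfolding j_def by linarith
  qed
  thus ?thesis using a b W_sub by (auto simp: W_def intro: Gset_add)
qed

lemma istop_TW: "istopology TWopen"
  unfolding istopology_def
proof (intro conjI allI impI)
  fix S T assume S0: "TWopen S" and T0: "TWopen T"
  show "TWopen (S \<inter> T)" unfolding TWopen_def
  proof (intro conjI ballI)
    show "S \<inter> T \<subseteq> Gset" using S0 by (auto simp: TWopen_def)
    fix x assume x: "x \<in> S \<inter> T"
    obtain m1 where "tr x (W m1) \<subseteq> S" using S0 x unfolding TWopen_def by blast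
    moreover obtain m2 where "tr x (W m2) \<subseteq> T" using T0 x unfolding TWopen_def by blast
    moreover have "W (\<lambda>k. max (m1 k) (m2 k)) \<subseteq> W m1" "W (\<lambda>k. max (m1 k) (m2 k)) \<subseteq> W m2"
      by (auto intro!: W_mono)
    ultimately show "\<exists>m. tr x (W m) \<subseteq> S \<inter> T" unfolding tr_def by blast
  qed
next
  fix K assume "\<forall>S\<in>K. TWopen S"
  then show "TWopen (\<Union>K)" unfolding TWopen_def by (meson Union_iff Union_least Union_upper subset_trans)
qed

lemma openin_TW: "openin TW U \<longleftrightarrow> TWopen U"
  unfolding TW_def using istop_TW by simp

lemma tr_W_Gset: "x \<in> Gset \<Longrightarrow> tr x (W m) \<subseteq> Gset"
  using W_sub by (auto simp: tr_def intro: Gset_add)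

lemma topspace_TW: "topspace TW = Gset"
proof -
  have "openin TW Gset" unfolding openin_TW TWopen_def using tr_W_Gset by auto
  hence "Gset \<subseteq> topspace TW" by (rule openin_subset)
  moreover have "topspace TW \<subseteq> Gset" using openin_topspace[of TW] unfolding openin_TW TWopen_def by blast
  ultimately show ?thesis by blast
qed

definition I :: "(nat \<Rightarrow> bit) \<Rightarrow> (nat \<Rightarrow> nat) \<Rightarrow> (nat \<Rightarrow> bit) set" where
  "I x m = {y \<in> Gset. \<exists>m'. tr y (W m') \<subseteq> tr x (W m)}"

lemma I_sub: "I x m \<subseteq> tr x (W m)"
  using W_0 by (force simp: I_def tr_def)
lemma I_mem: "x \<in> Gset \<Longrightarrow> x \<in> I x m"
  by (auto simp: I_def)
lemma I_open: "openin TW (I x m)"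
  unfolding openin_TW TWopen_def
proof (intro conjI ballI)
  show "I x m \<subseteq> Gset" by (auto simp: I_def)
  fix z assume z: "z \<in> I x m"
  then obtain m' where m': "tr z (W m') \<subseteq> tr x (W m)" and zG: "z \<in> Gset" by (auto simp: I_def)
  show "\<exists>m''. tr z (W m'') \<subseteq> I x m"
  proof (intro exI subsetI)
    fix y assume "y \<in> tr z (W (half m'))"
    then obtain w where w: "w \<in> W (half m')" and y: "y = z + w" by (auto simp: tr_def)
    have yG: "y \<in> Gset" using y zG w W_sub Gset_add by blast
    have "tr y (W (half m')) \<subseteq> tr z (W m')"
    proof
      fix u assume "u \<in> tr y (W (half m'))"
      then obtain v where v: "v \<in> W (half m')" and u: "u = y + v" by (auto simp: tr_def)
      have "w + v \<in> W m'" using W_half w v by blast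
      moreover have "u = z + (w + v)" using u y by (simp add: add.assoc)
      ultimately show "u \<in> tr z (W m')" by (auto simp: tr_def)
    qed
    with m' show "y \<in> I x m" using yG by (auto simp: I_def)
  qed
qed
lemma gt_TW: "group_topology Gset TW"
  unfolding group_topology_def
proof (intro conjI)
  show "topspace TW = Gset" by (rule topspace_TW)
  have "(uminus :: (nat\<Rightarrow>bit) \<Rightarrow> _) = id" by (rule ext) (simp add: fun_uminus)
  thus "continuous_map TW TW uminus" by simp
  show "continuous_map (prod_topology TW TW) TW (\<lambda>(x, y). x + y)"
    unfolding continuous_map
  proof (intro conjI allI impI)
    show "(\<lambda>(x, y). x + y) ` topspace (prod_topology TW TW) \<subseteq> topspace TW"
      by (auto simp: topspace_TW intro: Gset_add)
    fix U assume U: "openin TW U"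
    show "openin (prod_topology TW TW) {x \<in> topspace (prod_topology TW TW). (case x of (x, y) \<Rightarrow> x + y) \<in> U}"
      unfolding openin_prod_topology_alt
    proof (intro allI impI)
      fix a b assume ab: "(a, b) \<in> {x \<in> topspace (prod_topology TW TW). (case x of (x, y) \<Rightarrow> x + y) \<in> U}"
      hence aG: "a \<in> Gset" and bG: "b \<in> Gset" and abU: "a + b \<in> U" by (auto simp: topspace_TW)
      obtain m where m: "tr (a+b) (W m) \<subseteq> U" using U abU unfolding openin_TW TWopen_def by blast
      show "\<exists>U' V'. openin TW U' \<and> openin TW V' \<and> a \<in> U' \<and> b \<in> V' \<and>
          U' \<times> V' \<subseteq> {x \<in> topspace (prod_topology TW TW). (case x of (x, y) \<Rightarrow> x + y) \<in> U}"
      proof (intro exI conjI)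
        show "openin TW (I a (half m))" "openin TW (I b (half m))" by (rule I_open)+
        show "a \<in> I a (half m)" "b \<in> I b (half m)" using aG bG by (simp_all add: I_mem)
        show "I a (half m) \<times> I b (half m) \<subseteq> {x \<in> topspace (prod_topology TW TW). (case x of (x, y) \<Rightarrow> x + y) \<in> U}"
        proof (rule subsetI)
          fix z assume "z \<in> I a (half m) \<times> I b (half m)"
          then obtain p q where zpq: "z = (p, q)" and p: "p \<in> I a (half m)" and q: "q \<in> I b (half m)" by blast
          have pG: "p \<in> Gset" "q \<in> Gset" using p q by (auto simp: I_def)
          obtain w1 where w1: "w1 \<in> W (half m)" "p = a + w1" using p I_sub by (force simp: tr_def)
          obtain w2 where w2: "w2 \<in> W (half m)" "q = b + w2" using q I_sub by (force simp: tr_def)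
          have "w1 + w2 \<in> W m" using W_half w1 w2 by blast
          moreover have "p + q = (a + b) + (w1 + w2)" using w1 w2 by (simp add: ac_simps)
          ultimately have "p + q \<in> U" using m by (auto simp: tr_def)
          thus "z \<in> {x \<in> topspace (prod_topology TW TW). (case x of (x, y) \<Rightarrow> x + y) \<in> U}"
            using pG zpq by (auto simp: topspace_TW)
        qed
      qed
    qed
  qed
qed

lemma gen_in_W: "m 0 \<le> n \<Longrightarrow> gen n \<in> W m"
proof -
  assume n: "m 0 \<le> n"
  have "card ({n} \<inter> {..<m k}) \<le> k" for k
  proof (cases k)
    case 0 thus ?thesis using n by auto
  next
    case (Suc j)
    have "card ({n} \<inter> {..<m k}) \<le> card {n}" by (intro card_mono) auto
    thus ?thesis using Suc by simp
  qed
  thus ?thesis by (simp add: W_def supp_gen Gset_iff)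
qed

lemma lim_TW: "limitin TW gen 0 sequentially"
  unfolding limitin_def
proof (intro conjI allI impI)
  show "0 \<in> topspace TW" by (simp add: topspace_TW)
  fix U assume "openin TW U \<and> 0 \<in> U"
  then obtain m where m: "tr 0 (W m) \<subseteq> U" unfolding openin_TW TWopen_def by blast
  show "\<forall>\<^sub>F x in sequentially. gen x \<in> U"
    unfolding eventually_sequentially
    using m gen_in_W by (force simp: tr_def)
qed

lemma W_const: "W (\<lambda>_. c) = {g \<in> Gset. supp g \<inter> {..<c} = {}}"
proof -
  have "card (supp g \<inter> {..<c}) \<le> k" if "g \<in> Gset" "supp g \<inter> {..<c} = {}" for g k
    using that by simp
  moreover have "supp g \<inter> {..<c} = {}" if "g \<in> Gset" "\<forall>k. card (supp g \<inter> {..<c}) \<le> k" for g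
    using that(2)[rule_format, of 0] that(1) by (simp add: Gset_iff)
  ultimately show ?thesis unfolding W_def by blast
qed

lemma half_const: "half (\<lambda>_. c) = (\<lambda>_. c)"
  by (rule ext) (simp add: half_def)

lemma haus_TW: "Hausdorff_space TW"
  unfolding Hausdorff_space_def topspace_TW
proof (intro allI impI)
  fix x y assume xy: "x \<in> Gset \<and> y \<in> Gset \<and> x \<noteq> y"
  then obtain n where n: "x n \<noteq> y n" by blast
  define c where "c = (\<lambda>_::nat. Suc n)"
  have add_c: "a + b \<in> W c" if "a \<in> W c" "b \<in> W c" for a b
    using W_half[of a c b] that by (simp add: c_def half_const)
  have op: "openin TW (tr z (W c))" if "z \<in> Gset" for z
    unfolding openin_TW TWopen_def
  proof (intro conjI ballI)
    show "tr z (W c) \<subseteq> Gset" using that by (rule tr_W_Gset)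
    fix u assume "u \<in> tr z (W c)"
    then obtain w where w: "w \<in> W c" "u = z + w" by (auto simp: tr_def)
    show "\<exists>m. tr u (W m) \<subseteq> tr z (W c)"
    proof (intro exI subsetI)
      fix v assume "v \<in> tr u (W c)"
      then obtain w' where w': "w' \<in> W c" "v = u + w'" by (auto simp: tr_def)
      have "w + w' \<in> W c" using w w' add_c by blast
      moreover have "v = z + (w + w')" using w w' by (simp add: add.assoc)
      ultimately show "v \<in> tr z (W c)" unfolding tr_def by blast
    qed
  qed
  show "\<exists>U V. openin TW U \<and> openin TW V \<and> x \<in> U \<and> y \<in> V \<and> disjnt U V"
  proof (intro exI conjI)
    show "openin TW (tr x (W c))" "openin TW (tr y (W c))" using xy op by auto
    have "x + 0 \<in> tr x (W c)" "y + 0 \<in> tr y (W c)" unfolding tr_def using W_0 by blast+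
    thus "x \<in> tr x (W c)" "y \<in> tr y (W c)" by simp_all
    show "disjnt (tr x (W c)) (tr y (W c))"
      unfolding disjnt_def
    proof (rule ccontr)
      assume "tr x (W c) \<inter> tr y (W c) \<noteq> {}"
      then obtain w1 w2 where w: "w1 \<in> W c" "w2 \<in> W c" "x + w1 = y + w2" by (auto simp: tr_def)
      have "x + y = w1 + w2"
      proof -
        have "x + y = (x + w1) + (y + w1)" by (simp add: ac_simps)
        also have "\<dots> = (y + w2) + (y + w1)" using w by simp
        also have "\<dots> = w1 + w2" by (simp add: ac_simps)
        finally show ?thesis .
      qed
      hence "x + y \<in> W c" using add_c w by simp
      hence "supp (x+y) \<inter> {..<Suc n} = {}" by (simp add: W_const c_def)
      moreover have "(x + y) n \<noteq> 0" using n bit_add_ne by (simp add: plus_fun_def)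
      hence "n \<in> supp (x+y)" by (simp add: supp_def)
      ultimately show False by auto
    qed
  qed
qed
lemma gt_halving:
  assumes T: "group_topology Gset T" and V: "openin T V" "0 \<in> V"
  shows "\<exists>V'. openin T V' \<and> 0 \<in> V' \<and> (\<forall>a\<in>V'. \<forall>b\<in>V'. a + b \<in> V)"
proof -
  have ts: "topspace T = Gset" and c: "continuous_map (prod_topology T T) T (\<lambda>(x, y). x + y)"
    using T by (auto simp: group_topology_def)
  let ?P = "{x \<in> topspace (prod_topology T T). (case x of (x, y) \<Rightarrow> x + y) \<in> V}"
  have Po: "openin (prod_topology T T) ?P" using c V(1) unfolding continuous_map by blast
  have P0: "(0, 0) \<in> ?P" using V ts by (simp add: topspace_prod_topology)
  obtain U1 U2 where U: "openin T U1" "openin T U2" "0 \<in> U1" "0 \<in> U2" "U1 \<times> U2 \<subseteq> ?P"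
    using Po[unfolded openin_prod_topology_alt, rule_format, OF P0] by blast
  show ?thesis
  proof (intro exI conjI ballI)
    show "openin T (U1 \<inter> U2)" using U by auto
    show "0 \<in> U1 \<inter> U2" using U by auto
    fix a b assume "a \<in> U1 \<inter> U2" "b \<in> U1 \<inter> U2"
    hence "(a, b) \<in> ?P" using U(5) by blast
    thus "a + b \<in> V" by simp
  qed
qed

lemma finest_TW:
  assumes T: "group_topology Gset T" and lim: "limitin T gen 0 sequentially" and U: "openin T U"
  shows "openin TW U"
proof -
  have ts: "topspace T = Gset" and c: "continuous_map (prod_topology T T) T (\<lambda>(x, y). x + y)"
    using T by (auto simp: group_topology_def)
  have key: "\<exists>m. W m \<subseteq> V0" if V0: "openin T V0" "0 \<in> V0" for V0
  proof -
    define step where "step = (\<lambda>V. SOME V'. openin T V' \<and> 0 \<in> V' \<and> (\<forall>a\<in>V'. \<forall>b\<in>V'. a + b \<in> V))"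
    define Vs where "Vs = rec_nat V0 (\<lambda>k V. step V)"
    have Vs0: "Vs 0 = V0" and VsS: "Vs (Suc k) = step (Vs k)" for k by (simp_all add: Vs_def)
    have stepP: "openin T (step V) \<and> 0 \<in> step V \<and> (\<forall>a\<in>step V. \<forall>b\<in>step V. a + b \<in> V)"
      if "openin T V" "0 \<in> V" for V
      unfolding step_def by (rule someI_ex) (rule gt_halving[OF T that])
    have Vsopen: "openin T (Vs k) \<and> 0 \<in> Vs k" for k
    proof (induction k)
      case 0 show ?case unfolding Vs0 using V0 by blast
    next
      case (Suc k) show ?case unfolding VsS using stepP Suc by blast
    qed
    have Vsadd: "a \<in> Vs (Suc k) \<Longrightarrow> b \<in> Vs (Suc k) \<Longrightarrow> a + b \<in> Vs k" for a b k
      using stepP[OF conjunct1[OF Vsopen[of k]] conjunct2[OF Vsopen[of k]]] by (simp add: VsS)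
    define m where "m = (\<lambda>i. SOME N. \<forall>n\<ge>N. gen n \<in> Vs (Suc i))"
    have mP: "\<forall>n\<ge>m i. gen n \<in> Vs (Suc i)" for i
    proof -
      have "eventually (\<lambda>n. gen n \<in> Vs (Suc i)) sequentially"
        using lim Vsopen[of "Suc i"] unfolding limitin_def by blast
      hence "\<exists>N. \<forall>n\<ge>N. gen n \<in> Vs (Suc i)" unfolding eventually_sequentially .
      thus ?thesis unfolding m_def by (rule someI_ex)
    qed
    have claim: "\<forall>k S. finite S \<and> card S = n \<and> (\<forall>i. card (S \<inter> {..<m (k+i)}) \<le> i) \<longrightarrow> sum gen S \<in> Vs k" for n
    proof (induction n)
      case 0
      show ?case
      proof (intro allI impI)
        fix k S assume "finite S \<and> card S = 0 \<and> (\<forall>i. card (S \<inter> {..<m (k+i)}) \<le> i)"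
        hence "S = {}" by auto
        thus "sum gen S \<in> Vs k" using Vsopen[of k] by simp
      qed
    next
      case (Suc n)
      show ?case
      proof (intro allI impI)
        fix k S assume S: "finite S \<and> card S = Suc n \<and> (\<forall>i. card (S \<inter> {..<m (k+i)}) \<le> i)"
        hence fS: "finite S" and ne: "S \<noteq> {}" by auto
        define s where "s = Min S"
        have sS: "s \<in> S" using fS ne by (simp add: s_def)
        have smin: "\<And>t. t \<in> S \<Longrightarrow> s \<le> t" using fS by (simp add: s_def)
        have "card (S \<inter> {..<m k}) \<le> 0" using S[THEN conjunct2, THEN conjunct2, rule_format, of 0] by simp
        hence "S \<inter> {..<m k} = {}" using fS by simp
        hence "m k \<le> s" using sS by auto
        hence gs: "gen s \<in> Vs (Suc k)" using mP by blast
        define S' where "S' = S - {s}"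
        have S'fin: "finite S'" and S'card: "card S' = n" using fS S sS by (auto simp: S'_def)
        have S'cond: "card (S' \<inter> {..<m (Suc k + i)}) \<le> i" for i
        proof (cases "s < m (Suc k + i)")
          case True
          have "S \<inter> {..<m (Suc k + i)} = insert s (S' \<inter> {..<m (Suc k + i)})"
            using True sS by (auto simp: S'_def)
          moreover have "s \<notin> S' \<inter> {..<m (Suc k + i)}" by (simp add: S'_def)
          ultimately have "card (S \<inter> {..<m (Suc k + i)}) = Suc (card (S' \<inter> {..<m (Suc k + i)}))"
            using S'fin by simp
          moreover have "card (S \<inter> {..<m (k + Suc i)}) \<le> Suc i" using S by blast
          ultimately show ?thesis by simp
        next
          case False
          hence "S' \<inter> {..<m (Suc k + i)} = {}" using smin by (force simp: S'_def)
          thus ?thesis by simp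
        qed
        have "sum gen S' \<in> Vs (Suc k)" using Suc.IH S'fin S'card S'cond by simp
        moreover have "sum gen S = gen s + sum gen S'"
          using fS sS by (simp add: S'_def sum.remove)
        ultimately show "sum gen S \<in> Vs k" using gs Vsadd by simp
      qed
    qed
    show ?thesis
    proof (intro exI subsetI)
      fix g assume g: "g \<in> W m"
      hence gG: "g \<in> Gset" and gc: "\<forall>i. card (supp g \<inter> {..<m (0+i)}) \<le> i" by (auto simp: W_def)
      have "sum gen (supp g) \<in> Vs 0" using claim gG gc by (simp add: Gset_iff)
      thus "g \<in> V0" using sum_gen_supp[OF gG] Vs0 by simp
    qed
  qed
  show ?thesis unfolding openin_TW TWopen_def
  proof (intro conjI ballI)
    show "U \<subseteq> Gset" using openin_subset[OF U] ts by simp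
    fix x assume x: "x \<in> U"
    have xG: "x \<in> Gset" using openin_subset[OF U] ts x by auto
    have ct: "continuous_map T T (\<lambda>g. x + g)"
    proof -
      have "continuous_map T (prod_topology T T) (\<lambda>g. (x, g))"
        using xG ts by (simp add: continuous_map_paired)
      from continuous_map_compose[OF this c] show ?thesis by (simp add: o_def)
    qed
    let ?V0 = "{g \<in> topspace T. x + g \<in> U}"
    have "openin T ?V0" using ct U unfolding continuous_map by blast
    moreover have "0 \<in> ?V0" using x ts by simp
    ultimately obtain m where "W m \<subseteq> ?V0" using key by blast
    thus "\<exists>m. tr x (W m) \<subseteq> U" by (auto simp: tr_def)
  qed
qed

lemma strongest_eq: "strongest_topology Gset gen = TW"
  unfolding strongest_topology_def
proof (rule the_equality)
  show "group_topology Gset TW \<and> limitin TW gen 0 sequentially \<and>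
    (\<forall>T'. group_topology Gset T' \<and> limitin T' gen 0 sequentially \<longrightarrow> (\<forall>U. openin T' U \<longrightarrow> openin TW U))"
    using gt_TW lim_TW finest_TW by blast
  fix T assume T: "group_topology Gset T \<and> limitin T gen 0 sequentially \<and>
    (\<forall>T'. group_topology Gset T' \<and> limitin T' gen 0 sequentially \<longrightarrow> (\<forall>U. openin T' U \<longrightarrow> openin T U))"
  have "openin T U = openin TW U" for U
  proof
    assume "openin T U" thus "openin TW U" using finest_TW T by blast
  next
    assume "openin TW U" thus "openin T U" using T gt_TW lim_TW by blast
  qed
  thus "T = TW" by (simp add: topology_eq)
qed

definition B :: "nat \<Rightarrow> (nat \<Rightarrow> bit) set" where
  "B r = {g \<in> Gset. card (supp g) \<le> r}"

lemma prec_B: "precompact_in Gset TW (B r)"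
  unfolding precompact_in_def
proof (intro conjI allI impI)
  show "B r \<subseteq> Gset" by (auto simp: B_def)
  fix U assume U: "openin TW U \<and> 0 \<in> U"
  then obtain m where m: "tr 0 (W m) \<subseteq> U" unfolding openin_TW TWopen_def by blast
  hence WU: "W m \<subseteq> U" by (auto simp: tr_def)
  define N where "N = Max (m ` {..r})"
  define F where "F = (\<lambda>S. sum gen S) ` Pow {..<N}"
  show "\<exists>F. finite F \<and> F \<subseteq> Gset \<and> B r \<subseteq> {f + u |f u. f \<in> F \<and> u \<in> U}"
  proof (intro exI conjI subsetI)
    show "finite F" by (simp add: F_def)
    show "x \<in> Gset" if "x \<in> F" for x using that by (auto simp: F_def intro: Gset_sum_gen finite_subset)
    fix g assume g: "g \<in> B r"
    hence gG: "g \<in> Gset" and gc: "card (supp g) \<le> r" by (auto simp: B_def)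
    have fg: "finite (supp g)" using gG by (simp add: Gset_iff)
    define S where "S = supp g \<inter> {..<N}"
    define H where "H = supp g - {..<N}"
    have "g = sum gen S + sum gen H"
    proof -
      have "S \<union> H = supp g" by (auto simp: S_def H_def)
      hence "sum gen (supp g) = sum gen (S \<union> H)" by simp
      also have "\<dots> = sum gen S + sum gen H"
        using fg by (intro sum.union_disjoint) (auto simp: S_def H_def)
      finally show ?thesis using sum_gen_supp[OF gG] by simp
    qed
    moreover have "sum gen S \<in> F" by (auto simp: F_def S_def)
    moreover have "sum gen H \<in> W m"
    proof -
      have fH: "finite H" using fg by (simp add: H_def)
      have sH: "supp (sum gen H) = H" using fH by (rule supp_sum_gen)
      have "card (H \<inter> {..<m k}) \<le> k" for k
      proof (cases "k \<le> r")
        case True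
        hence "m k \<le> N" unfolding N_def by (intro Max_ge) auto
        hence "H \<inter> {..<m k} = {}" by (auto simp: H_def)
        thus ?thesis by simp
      next
        case False
        have "card (H \<inter> {..<m k}) \<le> card (supp g)" using fg by (intro card_mono) (auto simp: H_def)
        thus ?thesis using gc False by simp
      qed
      thus ?thesis using fH by (simp add: W_def sH Gset_sum_gen)
    qed
    ultimately show "g \<in> {f + u |f u. f \<in> F \<and> u \<in> U}" using WU by blast
  qed
qed

lemma prec_bounded:
  assumes P: "precompact_in Gset TW A" shows "\<exists>r. A \<subseteq> B r"
proof (rule ccontr)
  assume nb: "\<not> (\<exists>r. A \<subseteq> B r)"
  have AG: "A \<subseteq> Gset" using P by (simp add: precompact_in_def)
  have big: "\<exists>a\<in>A. r < card (supp a)" for r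
    using nb AG by (auto simp: B_def subset_iff not_le)
  have exM: "\<exists>M. \<exists>a\<in>A. 2*k+1 \<le> card (supp a \<inter> {..<M})" for k
  proof -
    obtain a where a: "a \<in> A" "2*k < card (supp a)" using big by blast
    have fa: "finite (supp a)" using a AG by (auto simp: Gset_iff)
    have "supp a \<subseteq> {..<Suc (Max (supp a))}" using fa by (auto simp: less_Suc_eq_le)
    hence "supp a \<inter> {..<Suc (Max (supp a))} = supp a" by blast
    hence "2*k+1 \<le> card (supp a \<inter> {..<Suc (Max (supp a))})" using a(2) by simp
    thus ?thesis using a(1) by blast
  qed
  define m where "m = (\<lambda>k. SOME M. \<exists>a\<in>A. 2*k+1 \<le> card (supp a \<inter> {..<M}))"
  have mP: "\<exists>a\<in>A. 2*k+1 \<le> card (supp a \<inter> {..<m k})" for k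
    unfolding m_def by (rule someI_ex) (rule exM)
  have "openin TW (I 0 m) \<and> 0 \<in> I 0 m" using I_open I_mem[of 0 m] by simp
  then obtain F where F: "finite F" "F \<subseteq> Gset" "A \<subseteq> {f + u |f u. f \<in> F \<and> u \<in> I 0 m}"
    using P unfolding precompact_in_def by blast
  define K where "K = Max (insert 0 ((\<lambda>f. card (supp f)) ` F))"
  have Kf: "card (supp f) \<le> K" if "f \<in> F" for f using F(1) that unfolding K_def by (intro Max_ge) auto
  obtain a where a: "a \<in> A" "2*K+1 \<le> card (supp a \<inter> {..<m K})" using mP by blast
  then obtain f u where fu: "f \<in> F" "u \<in> I 0 m" "a = f + u" using F(3) by blast
  have uW: "u \<in> W m" using fu(2) I_sub by (force simp: tr_def)
  have fu_fin: "finite (supp u)" "finite (supp f)" using uW F(2) fu(1) W_sub[of m] by (auto simp: Gset_iff)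
  have "supp a \<inter> {..<m K} \<subseteq> (supp u \<inter> {..<m K}) \<union> supp f" using fu(3) by (auto simp: supp_add)
  hence "card (supp a \<inter> {..<m K}) \<le> card ((supp u \<inter> {..<m K}) \<union> supp f)"
    using fu_fin by (intro card_mono) auto
  also have "\<dots> \<le> card (supp u \<inter> {..<m K}) + card (supp f)" by (rule card_Un_le)
  also have "card (supp u \<inter> {..<m K}) \<le> K" using uW by (simp add: W_def)
  also have "card (supp f) \<le> K" using Kf fu(1) by simp
  finally show False using a(2) by simp
qed

lemma hamming_supp: "finite x \<Longrightarrow> finite y \<Longrightarrow>
  hamming x y = card (supp (sum gen x + sum gen y))"
  by (simp add: hamming_def supp_add supp_sum_gen)

theorem mainTheorem10:
  shows "is_T_sequence Gset gen \<and>
    asymorphism Hset hamming_coarse Gset (group_coarse Gset (strongest_topology Gset gen))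
      (\<lambda>F. \<Sum>i\<in>F. gen i)"
proof (intro conjI)
  show "is_T_sequence Gset gen" unfolding is_T_sequence_def using gt_TW haus_TW lim_TW by blast
  let ?f = "\<lambda>F. \<Sum>i\<in>F. gen i"
  have inj: "inj_on ?f Hset"
  proof (rule inj_onI)
    fix x y assume "x \<in> Hset" "y \<in> Hset" "?f x = ?f y"
    thus "x = y" by (metis Hset_def mem_Collect_eq supp_sum_gen)
  qed
  have img: "?f ` Hset = Gset"
  proof
    show "?f ` Hset \<subseteq> Gset" by (auto simp: Hset_def Gset_sum_gen)
    show "Gset \<subseteq> ?f ` Hset"
    proof
      fix g assume g: "g \<in> Gset"
      hence "supp g \<in> Hset" by (simp add: Hset_def Gset_iff)
      thus "g \<in> ?f ` Hset" using sum_gen_supp[OF g] by (metis image_eqI)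
    qed
  qed
  have inv: "inv_into Hset ?f g = supp g" if g: "g \<in> Gset" for g
    using inj g by (intro inv_into_f_eq) (auto simp: Hset_def Gset_iff sum_gen_supp)
  show "asymorphism Hset hamming_coarse Gset (group_coarse Gset (strongest_topology Gset gen)) ?f"
    unfolding asymorphism_def strongest_eq
  proof (intro conjI)
    show "bij_betw ?f Hset Gset" using inj img by (simp add: bij_betw_def)
    show "macro_uniform Hset hamming_coarse (group_coarse Gset TW) ?f"
      unfolding macro_uniform_def
    proof
      fix E assume "E \<in> hamming_coarse"
      then obtain r :: real where r: "r \<ge> 0"
        "E \<subseteq> {(x, y). x \<in> Hset \<and> y \<in> Hset \<and> real (hamming x y) \<le> r}"
        by (auto simp: hamming_coarse_def)
      define R where "R = nat \<lceil>r\<rceil>"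
      define E' where "E' = {(x, y). x \<in> Gset \<and> y \<in> Gset \<and> x \<in> (\<lambda>z. z + y) ` B R}"
      have "E' \<in> group_coarse Gset TW" unfolding group_coarse_def E'_def using prec_B by blast
      moreover have "?f ` (E `` {x}) \<subseteq> E' `` {?f x}" if x: "x \<in> Hset" for x
      proof
        fix w assume "w \<in> ?f ` (E `` {x})"
        then obtain z where z: "(x, z) \<in> E" "w = ?f z" by auto
        have zH: "z \<in> Hset" and hz: "real (hamming x z) \<le> r" using r(2) z(1) by auto
        have fx: "finite x" "finite z" using x zH by (auto simp: Hset_def)
        have "real (hamming x z) \<le> real R" using hz R_def of_nat_ceiling[of r] by linarith
        hence "hamming x z \<le> R" by simp
        hence "?f x + ?f z \<in> B R" using fx by (simp add: B_def hamming_supp Gset_add Gset_sum_gen)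
        moreover have "?f x = (?f x + ?f z) + ?f z" by (simp add: add.assoc)
        ultimately have "?f x \<in> (\<lambda>y. y + ?f z) ` B R" by blast
        thus "w \<in> E' `` {?f x}" using z(2) fx by (auto simp: E'_def Gset_sum_gen)
      qed
      ultimately show "\<exists>E'\<in>group_coarse Gset TW. \<forall>x\<in>Hset. ?f ` (E `` {x}) \<subseteq> E' `` {?f x}" by blast
    qed
    show "macro_uniform Gset (group_coarse Gset TW) hamming_coarse (inv_into Hset ?f)"
      unfolding macro_uniform_def
    proof
      fix E assume "E \<in> group_coarse Gset TW"
      then obtain A where A: "precompact_in Gset TW A"
        "E \<subseteq> {(x, y). x \<in> Gset \<and> y \<in> Gset \<and> x \<in> (\<lambda>z. z + y) ` A}"
        by (auto simp: group_coarse_def)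
      obtain r where r: "A \<subseteq> B r" using prec_bounded[OF A(1)] by blast
      define E' where "E' = {(x, y). x \<in> Hset \<and> y \<in> Hset \<and> real (hamming x y) \<le> real r}"
      have "E' \<in> hamming_coarse" unfolding hamming_coarse_def E'_def by (intro CollectI exI[of _ "real r"]) auto
      moreover have "inv_into Hset ?f ` (E `` {x}) \<subseteq> E' `` {inv_into Hset ?f x}" if x: "x \<in> Gset" for x
      proof
        fix w assume "w \<in> inv_into Hset ?f ` (E `` {x})"
        then obtain z where z: "(x, z) \<in> E" "w = inv_into Hset ?f z" by auto
        then obtain a where zG: "z \<in> Gset" and a: "a \<in> A" "x = a + z" using A(2) by blast
        have w: "w = supp z" using z(2) inv[OF zG] by simp
        have fx: "finite (supp x)" "finite (supp z)" using x zG by (auto simp: Gset_iff)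
        have "x + z = a" using a(2) by (simp add: add.assoc)
        have "hamming (supp x) (supp z) = card (supp (x + z))" by (simp add: hamming_def supp_add)
        hence "hamming (supp x) (supp z) = card (supp a)" using \<open>x + z = a\<close> by simp
        also have "\<dots> \<le> r" using a(1) r by (auto simp: B_def)
        finally show "w \<in> E' `` {inv_into Hset ?f x}"
          using w inv[OF x] fx by (auto simp: E'_def Hset_def)
      qed
      ultimately show "\<exists>E'\<in>hamming_coarse. \<forall>x\<in>Gset. inv_into Hset ?f ` (E `` {x}) \<subseteq> E' `` {inv_into Hset ?f x}" by blast
    qed
  qed
qed
end
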